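(* Let $n\ge3$, $j\ge0$, $b\in B$, $(\mu_i)_{i=1}^n\in\mathbb Z^n$ and $\mu=(-\mu_1-\mu_2)\Lambda_0+(\mu_1-\mu_2)\Lambda_1+\cdots+(\mu_{n-1}-\mu_n)\Lambda_{n-1}+\mu_n\Lambda_n$. Then $$g_j(b,\mu)=\sum_\gamma q^{Q}\,\frac{(q^2)_{\gamma_1+\gamma_{\bar1}}\,(q)_j}{(q^2)_{\gamma_1}(q^2)_{\gamma_{\bar1}}(q)_{\gamma_1+\gamma_{\bar1}}\prod_{i=2}^n(q)_{\gamma_i}(q)_{\gamma_{\bar i}}}\,G(b,\mu,\gamma),$$ where $Q=\frac12\sum_{i\in B}\gamma_i(\gamma_i-1)-\gamma_1\gamma_{\bar1}+\sum_{i\in B}H(b\otimes i)\gamma_i$, $G(b,\mu,\gamma)=1$ if $b\in\{1,\bar1\}$ and $G(b,\mu,\gamma)=\dfrac{q^{\mu_1/2}+q^{-\mu_1/2}}{q^{(\gamma_1+\gamma_{\bar1})/2}+q^{-(\gamma_1+\gamma_{\bar1})/2}}$ otherwise, and the sum is over $\gamma=(\gamma_i)_{i\in B}\in\mathbb Z_{\ge0}^{2n}$ with $\gamma_i-\gamma_{\bar i}=\mu_i$ for $i=1,\dots,n$ and $\sum_{i\in B}\gamma_i=j$.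
   Context: Affine algebra $A^{(2)}_{2n-1}$ with fundamental weights $\Lambda_0,\dots,\Lambda_n$, $P_{cl}=\bigoplus\mathbb Z\Lambda_i$. $B=\{1,\dots,n,\bar n,\dots,\bar1\}$ totally ordered by $1\prec\cdots\prec n\prec\bar n\prec\cdots\prec\bar1$. Weights: $wt(\bar b)=-wt(b)$, $wt(b)=\Lambda_b-\Lambda_{b-1}$ for $b\ne2$ (so $wt(1)=\Lambda_1-\Lambda_0$), $wt(2)=\Lambda_2-\Lambda_1-\Lambda_0$. Energy function: $H(b\otimes b')=0$ if $b\prec b'$, $=1$ if $b\succeq b'$, except $H(1\otimes\bar1)=-1$. For $j\ge0$, $b\in B$, $\mu\in P_{cl}$: $g_j(b,\mu)=\sum q^{\sum_{i=1}^j iH(b_{i+1}\otimes b_i)}$, summed over $(b_j,\dots,b_1)\in B^j$ with $wt(b_j)+\cdots+wt(b_1)=\mu$, where $b_{j+1}=b$. $(x)_m=\prod_{i=1}^m(1-x^i)$. *)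

theory Defs
  imports Complex_Main "HOL-Library.FuncSet"
begin

text \<open>Letters of the crystal B: Unb i stands for i, Bar i for bar i (1 \<le> i \<le> n).\<close>
datatype letter = Unb nat | Bar nat

definition Bset :: "nat \<Rightarrow> letter set" where
  "Bset n = Unb ` {1..n} \<union> Bar ` {1..n}"

fun prec :: "letter \<Rightarrow> letter \<Rightarrow> bool" where
  "prec (Unb i) (Unb k) = (i < k)"
| "prec (Unb i) (Bar k) = True"
| "prec (Bar i) (Unb k) = False"
| "prec (Bar i) (Bar k) = (k < i)"

text \<open>Weights in P_cl, as coefficient functions: k \<mapsto> coefficient of Lambda_k.\<close>
definition wtU :: "nat \<Rightarrow> nat \<Rightarrow> int" where
  "wtU i = (\<lambda>k. (if k = i then 1 else 0) - (if k = i - 1 then 1 else 0)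
                 - (if i = 2 \<and> k = 0 then 1 else 0))"

fun wt :: "letter \<Rightarrow> nat \<Rightarrow> int" where
  "wt (Unb i) = wtU i"
| "wt (Bar i) = (\<lambda>k. - wtU i k)"

definition H :: "letter \<Rightarrow> letter \<Rightarrow> int" where
  "H x y = (if x = Unb 1 \<and> y = Bar 1 then -1 else if prec x y then 0 else 1)"

text \<open>g_j(b,mu): paths (b_j,...,b_1) are functions bs on {1..j}; b_{j+1} = b.\<close>
definition gfun :: "nat \<Rightarrow> nat \<Rightarrow> letter \<Rightarrow> (nat \<Rightarrow> int) \<Rightarrow> real \<Rightarrow> real" where
  "gfun n j b mu q =
     (\<Sum>bs \<in> {bs \<in> Pi\<^sub>E {1..j} (\<lambda>_. Bset n). (\<lambda>k. \<Sum>i=1..j. wt (bs i) k) = mu}.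
        q powr (real_of_int (\<Sum>i=1..j. int i * H (if i = j then b else bs (i + 1)) (bs i))))"

definition qpoch :: "real \<Rightarrow> nat \<Rightarrow> real" where
  "qpoch x m = (\<Prod>i=1..m. 1 - x ^ i)"

definition muw :: "nat \<Rightarrow> (nat \<Rightarrow> int) \<Rightarrow> nat \<Rightarrow> int" where
  "muw n mus = (\<lambda>k. if k = 0 then - mus 1 - mus 2
                     else if k < n then mus k - mus (k + 1)
                     else if k = n then mus n else 0)"

definition Gam :: "nat \<Rightarrow> nat \<Rightarrow> (nat \<Rightarrow> int) \<Rightarrow> (letter \<Rightarrow> nat) set" where
  "Gam n j mus = {\<gamma> \<in> Pi\<^sub>E (Bset n) (\<lambda>_. UNIV).
      (\<forall>i\<in>{1..n}. int (\<gamma> (Unb i)) - int (\<gamma> (Bar i)) = mus i) \<and> (\<Sum>x\<in>Bset n. \<gamma> x) = j}"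

definition Qexp :: "nat \<Rightarrow> letter \<Rightarrow> (letter \<Rightarrow> nat) \<Rightarrow> real" where
  "Qexp n b \<gamma> = (1/2) * (\<Sum>x\<in>Bset n. real (\<gamma> x) * (real (\<gamma> x) - 1))
     - real (\<gamma> (Unb 1)) * real (\<gamma> (Bar 1))
     + (\<Sum>x\<in>Bset n. real_of_int (H b x) * real (\<gamma> x))"

definition Gfac :: "letter \<Rightarrow> (nat \<Rightarrow> int) \<Rightarrow> (letter \<Rightarrow> nat) \<Rightarrow> real \<Rightarrow> real" where
  "Gfac b mus \<gamma> q = (if b \<in> {Unb 1, Bar 1} then 1 else
     (q powr (real_of_int (mus 1) / 2) + q powr (- real_of_int (mus 1) / 2)) /
     (q powr (real (\<gamma> (Unb 1) + \<gamma> (Bar 1)) / 2) + q powr (- real (\<gamma> (Unb 1) + \<gamma> (Bar 1)) / 2)))"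

definition rhs :: "nat \<Rightarrow> nat \<Rightarrow> letter \<Rightarrow> (nat \<Rightarrow> int) \<Rightarrow> real \<Rightarrow> real" where
  "rhs n j b mus q = (\<Sum>\<gamma> \<in> Gam n j mus.
     q powr (Qexp n b \<gamma>) *
     (qpoch (q^2) (\<gamma> (Unb 1) + \<gamma> (Bar 1)) * qpoch q j) /
     (qpoch (q^2) (\<gamma> (Unb 1)) * qpoch (q^2) (\<gamma> (Bar 1)) * qpoch q (\<gamma> (Unb 1) + \<gamma> (Bar 1))
      * (\<Prod>i=2..n. qpoch q (\<gamma> (Unb i)) * qpoch q (\<gamma> (Bar i))))
     * Gfac b mus \<gamma> q)"

end

theory Submission
  imports Defs
begin



definition lt :: "nat \<Rightarrow> nat \<Rightarrow> letter" where
  "lt n p = (if p \<le> n then Unb p else Bar (2*n+1-p))"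

lemma lt_inj: "inj_on (lt n) {1..2*n}"
  unfolding inj_on_def lt_def by auto

lemma lt_image: "lt n ` {1..2*n} = Bset n"
proof
  show "lt n ` {1..2*n} \<subseteq> Bset n" unfolding lt_def Bset_def by (auto simp: image_iff)
next
  show "Bset n \<subseteq> lt n ` {1..2*n}"
  proof
    fix x assume "x \<in> Bset n"
    then consider i where "i\<in>{1..n}" "x = Unb i" | i where "i\<in>{1..n}" "x = Bar i"
      unfolding Bset_def by auto
    then show "x \<in> lt n ` {1..2*n}"
    proof cases
      case 1 then show ?thesis unfolding lt_def by (intro image_eqI[of _ _ i]) auto
    next
      case 2 then show ?thesis unfolding lt_def by (intro image_eqI[of _ _ "2*n+1-i"]) auto
    qed
  qed
qed

lemma sum_Bset: "(\<Sum>x\<in>Bset n. f x) = (\<Sum>p=1..2*n. f (lt n p))"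
  by (metis lt_image lt_inj sum.reindex_cong)

lemma finite_Bset[simp]: "finite (Bset n)"
  unfolding Bset_def by auto

lemma H_lt:
  assumes "p \<in> {1..2*n}" "r \<in> {1..2*n}"
  shows "H (lt n p) (lt n r) = (if p = 1 \<and> r = 2*n then -1 else if p < r then 0 else 1)"
  using assms unfolding H_def lt_def by auto

lemma lt1[simp]: "n \<ge> 1 \<Longrightarrow> lt n 1 = Unb 1" unfolding lt_def by auto
lemma lt2n[simp]: "n \<ge> 1 \<Longrightarrow> lt n (2*n) = Bar 1" unfolding lt_def by auto
lemma lt_mid: "p \<in> {2..2*n-1} \<Longrightarrow> lt n p \<noteq> Unb 1 \<and> lt n p \<noteq> Bar 1"
  unfolding lt_def by auto




definition cntE :: "nat \<Rightarrow> nat \<Rightarrow> (nat \<Rightarrow> letter) \<Rightarrow> letter \<Rightarrow> nat" where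
  "cntE n j bs = (\<lambda>x\<in>Bset n. card {i\<in>{1..j}. bs i = x})"

lemma count_sum:
  fixes f :: "letter \<Rightarrow> int" and bs :: "nat \<Rightarrow> letter"
  assumes "bs \<in> Pi\<^sub>E {1..j} (\<lambda>_. Bset n)"
  shows "(\<Sum>i=1..j. f (bs i)) = (\<Sum>x\<in>Bset n. int (card {i\<in>{1..j}. bs i = x}) * f x)"
proof -
  have "bs ` {1..j} \<subseteq> Bset n" using assms by auto
  then have "(\<Sum>y\<in>Bset n. \<Sum>i\<in>{i. i\<in>{1..j} \<and> bs i = y}. f (bs i)) = (\<Sum>i=1..j. f (bs i))"
    by (intro sum.group) simp_all
  moreover have "(\<Sum>i\<in>{i. i\<in>{1..j} \<and> bs i = y}. f (bs i)) = int (card {i\<in>{1..j}. bs i = y}) * f y" for y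
    by simp
  ultimately show ?thesis by simp
qed

lemma card_sum:
  fixes bs :: "nat \<Rightarrow> letter"
  assumes "bs \<in> Pi\<^sub>E {1..j} (\<lambda>_. Bset n)"
  shows "(\<Sum>x\<in>Bset n. cntE n j bs x) = j"
proof -
  have "int (\<Sum>x\<in>Bset n. cntE n j bs x) = (\<Sum>x\<in>Bset n. int (card {i\<in>{1..j}. bs i = x}) * 1)"
    unfolding cntE_def by simp
  also have "\<dots> = (\<Sum>i=1..j. (\<lambda>_. 1::int) (bs i))"
    using count_sum[OF assms, of "\<lambda>_. 1"] by simp
  finally show ?thesis by (simp add: of_nat_sum[symmetric] del: of_nat_sum)
qed

lemma Bset_split: "Bset n = Unb ` {1..n} \<union> Bar ` {1..n}" unfolding Bset_def ..

lemma sum_Bset_UB: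
  fixes f :: "letter \<Rightarrow> 'a::comm_monoid_add"
  shows "(\<Sum>x\<in>Bset n. f x) = (\<Sum>i=1..n. f (Unb i)) + (\<Sum>i=1..n. f (Bar i))"
proof -
  have "(\<Sum>x\<in>Bset n. f x) = (\<Sum>x\<in>Unb ` {1..n}. f x) + (\<Sum>x\<in>Bar ` {1..n}. f x)"
    unfolding Bset_split by (rule sum.union_disjoint) auto
  also have "\<dots> = (\<Sum>i=1..n. f (Unb i)) + (\<Sum>i=1..n. f (Bar i))"
    by (simp add: sum.reindex inj_on_def)
  finally show ?thesis .
qed

lemma wt_sum:
  "(\<Sum>x\<in>Bset n. int (c x) * wt x k) = (\<Sum>i=1..n. (int (c (Unb i)) - int (c (Bar i))) * wtU i k)"
proof -
  have "(\<Sum>x\<in>Bset n. int (c x) * wt x k) = (\<Sum>i=1..n. int (c (Unb i)) * wtU i k) + (\<Sum>i=1..n. - (int (c (Bar i)) * wtU i k))"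
    unfolding sum_Bset_UB by simp
  also have "\<dots> = (\<Sum>i=1..n. int (c (Unb i)) * wtU i k - int (c (Bar i)) * wtU i k)"
    by (simp add: sum_subtractf sum_negf)
  also have "\<dots> = (\<Sum>i=1..n. (int (c (Unb i)) - int (c (Bar i))) * wtU i k)"
    by (simp add: left_diff_distrib)
  finally show ?thesis .
qed

lemma muw_sum:
  assumes "n \<ge> 2"
  shows "(\<lambda>k. \<Sum>i=1..n. m i * wtU i k) = muw n m"
proof
  fix k :: nat
  define c where "c = (if k = 0 then 1 else k + 1)"
  have e: "m i * wtU i k = (if i = k then m i else 0) - (if i = c then m i else 0)
       - (if i = 2 \<and> k = 0 then m i else 0)" if "i \<in> {1..n}" for i
  proof -
    have "(k = i - 1) = (i = c)" using that unfolding c_def by auto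
    then show ?thesis unfolding wtU_def by (simp add: if_distrib algebra_simps)
  qed
  have "(\<Sum>i=1..n. m i * wtU i k) = (\<Sum>i=1..n. (if i = k then m i else 0))
      - (\<Sum>i=1..n. (if i = c then m i else 0))
      - (\<Sum>i=1..n. (if i = 2 \<and> k = 0 then m i else 0))"
    unfolding sum_subtractf[symmetric] by (rule sum.cong[OF refl]) (rule e)
  also have "\<dots> = (if k \<in> {1..n} then m k else 0)
      - (if c \<in> {1..n} then m c else 0)
      - (if k = 0 then m 2 else 0)"
  proof -
    have "(\<Sum>i=1..n. (if i = 2 \<and> k = 0 then m i else 0)) = (if k = 0 then m 2 else 0)"
      using assms by (cases "k = 0") (simp_all add: sum.delta')
    then show ?thesis by (simp add: sum.delta')
  qed
  also have "\<dots> = muw n m k"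
    using assms unfolding muw_def c_def by auto
  finally show "(\<Sum>i=1..n. m i * wtU i k) = muw n m k" .
qed

lemma muw_inj:
  assumes "n \<ge> 2" "muw n m = muw n mu"
  shows "\<forall>i\<in>{1..n}. m i = mu i"
proof -
  have "\<forall>d. d < n \<longrightarrow> m (n-d) = mu (n-d)"
  proof
    fix d show "d < n \<longrightarrow> m (n-d) = mu (n-d)"
    proof (induction d)
      case 0
      have "muw n m n = muw n mu n" using assms by simp
      then show ?case using assms unfolding muw_def by simp
    next
      case (Suc d)
      show ?case
      proof
        assume "Suc d < n"
        then have IH: "m (n-d) = mu (n-d)" using Suc by simp
        have "muw n m (n - Suc d) = muw n mu (n - Suc d)" using assms by simp
        moreover have "n - Suc d + 1 = n - d" "n - Suc d \<noteq> 0" "n - Suc d < n"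
          using \<open>Suc d < n\<close> by auto
        ultimately show "m (n - Suc d) = mu (n - Suc d)" using IH unfolding muw_def by auto
      qed
    qed
  qed
  show ?thesis
  proof
    fix i assume i: "i \<in> {1..n}"
    then have "n - i < n" "n - (n - i) = i" by auto
    moreover have "m (n - (n - i)) = mu (n - (n - i))"
      using \<open>\<forall>d. d < n \<longrightarrow> m (n-d) = mu (n-d)\<close> \<open>n - i < n\<close> by blast
    ultimately show "m i = mu i" by simp
  qed
qed

lemma muw_cong:
  assumes "n \<ge> 2" "\<forall>i\<in>{1..n}. m i = mu i"
  shows "muw n m = muw n mu"
proof
  fix k
  have "m 1 = mu 1" "m 2 = mu 2" using assms by auto
  moreover have "k < n \<Longrightarrow> k \<noteq> 0 \<Longrightarrow> m k = mu k \<and> m (k+1) = mu (k+1)" using assms(2) by auto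
  moreover have "m n = mu n" using assms by auto
  ultimately show "muw n m k = muw n mu k" unfolding muw_def by auto
qed

lemma weight_iff_Gam:
  assumes "n \<ge> 2" "bs \<in> Pi\<^sub>E {1..j} (\<lambda>_. Bset n)"
  shows "((\<lambda>k. \<Sum>i=1..j. wt (bs i) k) = muw n mus) \<longleftrightarrow> cntE n j bs \<in> Gam n j mus"
proof -
  let ?c = "cntE n j bs"
  let ?m = "\<lambda>i. int (?c (Unb i)) - int (?c (Bar i))"
  have "(\<lambda>k. \<Sum>i=1..j. wt (bs i) k) = (\<lambda>k. \<Sum>x\<in>Bset n. int (?c x) * wt x k)"
  proof
    fix k
    show "(\<Sum>i=1..j. wt (bs i) k) = (\<Sum>x\<in>Bset n. int (?c x) * wt x k)"
    proof -
      have "(\<Sum>x\<in>Bset n. int (?c x) * wt x k) = (\<Sum>x\<in>Bset n. int (card {i\<in>{1..j}. bs i = x}) * wt x k)"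
        by (rule sum.cong) (auto simp: cntE_def)
      then show ?thesis using count_sum[OF assms(2), of "\<lambda>x. wt x k"] by simp
    qed
  qed
  also have "\<dots> = (\<lambda>k. \<Sum>i=1..n. ?m i * wtU i k)"
    by (simp only: wt_sum)
  also have "\<dots> = muw n ?m" by (rule muw_sum[OF assms(1)])
  finally have 1: "(\<lambda>k. \<Sum>i=1..j. wt (bs i) k) = muw n ?m" .
  have 2: "?c \<in> Pi\<^sub>E (Bset n) (\<lambda>_. UNIV)" unfolding cntE_def by auto
  have 3: "(muw n ?m = muw n mus) \<longleftrightarrow> (\<forall>i\<in>{1..n}. ?m i = mus i)"
  proof
    assume "muw n ?m = muw n mus" then show "\<forall>i\<in>{1..n}. ?m i = mus i" by (rule muw_inj[OF assms(1)])
  next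
    assume "\<forall>i\<in>{1..n}. ?m i = mus i" then show "muw n ?m = muw n mus" by (rule muw_cong[OF assms(1)])
  qed
  show ?thesis
    unfolding 1 Gam_def 3 using 2 card_sum[OF assms(2)] by simp
qed




definition stat :: "nat \<Rightarrow> letter \<Rightarrow> (nat \<Rightarrow> letter) \<Rightarrow> int" where
  "stat j b bs = (\<Sum>i=1..j. int i * H (if i = j then b else bs (i + 1)) (bs i))"

definition Fq :: "nat \<Rightarrow> real \<Rightarrow> nat \<Rightarrow> letter \<Rightarrow> (letter \<Rightarrow> nat) \<Rightarrow> real" where
  "Fq n q j b \<gamma> = (\<Sum>bs\<in>Pi\<^sub>E {1..j} (\<lambda>_. Bset n).
     if cntE n j bs = \<gamma> then q powr real_of_int (stat j b bs) else 0)"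

lemma stat_upd:
  assumes "bs \<in> Pi\<^sub>E {1..j} (\<lambda>_. Bset n)"
  shows "stat (Suc j) b (bs(Suc j := y)) = int (Suc j) * H b y + stat j y bs"
proof -
  have "stat (Suc j) b (bs(Suc j := y)) =
     (\<Sum>i=1..j. int i * H (if i = Suc j then b else (bs(Suc j := y)) (i + 1)) ((bs(Suc j := y)) i))
     + int (Suc j) * H b y"
    unfolding stat_def by simp
  also have "(\<Sum>i=1..j. int i * H (if i = Suc j then b else (bs(Suc j := y)) (i + 1)) ((bs(Suc j := y)) i))
      = stat j y bs"
    unfolding stat_def by (intro sum.cong) auto
  finally show ?thesis by (metis add.commute)
qed

lemma cnt_upd:
  fixes bs :: "nat \<Rightarrow> letter"
  assumes "bs \<in> Pi\<^sub>E {1..j} (\<lambda>_. Bset n)" "y \<in> Bset n"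
  shows "cntE n (Suc j) (bs(Suc j := y)) = (cntE n j bs)(y := cntE n j bs y + 1)"
proof
  fix x
  show "cntE n (Suc j) (bs(Suc j := y)) x = ((cntE n j bs)(y := cntE n j bs y + 1)) x"
  proof (cases "x \<in> Bset n")
    case True
    have "{i\<in>{1..Suc j}. (bs(Suc j := y)) i = x} = {i\<in>{1..j}. bs i = x} \<union> (if y = x then {Suc j} else {})"
      by auto
    then have "card {i\<in>{1..Suc j}. (bs(Suc j := y)) i = x} = card {i\<in>{1..j}. bs i = x} + (if y = x then 1 else 0)"
      by (simp add: card_insert_if)
    then show ?thesis using True assms unfolding cntE_def by auto
  next
    case False
    then show ?thesis using assms unfolding cntE_def by auto
  qed
qed

lemma cond_iff:
  fixes c \<gamma> :: "'a \<Rightarrow> nat"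
  assumes "c \<in> Pi\<^sub>E A (\<lambda>_. UNIV)" "\<gamma> \<in> Pi\<^sub>E A (\<lambda>_. UNIV)" "y \<in> A"
  shows "(c(y := c y + 1) = \<gamma>) \<longleftrightarrow> (0 < \<gamma> y \<and> c = \<gamma>(y := \<gamma> y - 1))"
proof
  assume h: "c(y := c y + 1) = \<gamma>"
  have 1: "\<gamma> y = c y + 1" using fun_cong[OF h, of y] by simp
  have 2: "\<gamma> z = c z" if "z \<noteq> y" for z using fun_cong[OF h, of z] that by simp
  show "0 < \<gamma> y \<and> c = \<gamma>(y := \<gamma> y - 1)" using 1 2 by (auto simp: fun_eq_iff)
next
  assume h: "0 < \<gamma> y \<and> c = \<gamma>(y := \<gamma> y - 1)"
  then show "c(y := c y + 1) = \<gamma>" by (auto simp: fun_eq_iff)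
qed

lemma F_rec:
  assumes "\<gamma> \<in> Pi\<^sub>E (Bset n) (\<lambda>_. UNIV)"
  shows "Fq n q (Suc j) b \<gamma> = (\<Sum>y\<in>Bset n. if 0 < \<gamma> y then
      q powr (real (Suc j) * real_of_int (H b y)) * Fq n q j y (\<gamma>(y := \<gamma> y - 1)) else 0)"
proof -
  let ?h = "\<lambda>bs. if cntE n (Suc j) bs = \<gamma> then q powr real_of_int (stat (Suc j) b bs) else 0"
  have ins: "{1..Suc j} = insert (Suc j) {1..j}" by auto
  have "Fq n q (Suc j) b \<gamma> = sum ?h (Pi\<^sub>E (insert (Suc j) {1..j}) (\<lambda>_. Bset n))"
    unfolding Fq_def ins ..
  also have "\<dots> = sum (?h \<circ> (\<lambda>(y, g). g(Suc j := y))) (Bset n \<times> Pi\<^sub>E {1..j} (\<lambda>_. Bset n))"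
    unfolding PiE_insert_eq by (rule sum.reindex) (rule inj_combinator[where T="\<lambda>_. Bset n", simplified], simp)
  also have "\<dots> = (\<Sum>y\<in>Bset n. \<Sum>g\<in>Pi\<^sub>E {1..j} (\<lambda>_. Bset n). ?h (g(Suc j := y)))"
    by (subst sum.cartesian_product) (auto simp: comp_def intro!: sum.cong)
  also have "\<dots> = (\<Sum>y\<in>Bset n. if 0 < \<gamma> y then
      q powr (real (Suc j) * real_of_int (H b y)) * Fq n q j y (\<gamma>(y := \<gamma> y - 1)) else 0)"
  proof (rule sum.cong[OF refl])
    fix y assume y: "y \<in> Bset n"
    have "?h (g(Suc j := y)) = (if 0 < \<gamma> y then q powr (real (Suc j) * real_of_int (H b y)) *
        (if cntE n j g = \<gamma>(y := \<gamma> y - 1) then q powr real_of_int (stat j y g) else 0) else 0)"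
      if g: "g \<in> Pi\<^sub>E {1..j} (\<lambda>_. Bset n)" for g
    proof -
      have c: "cntE n j g \<in> Pi\<^sub>E (Bset n) (\<lambda>_. UNIV)" unfolding cntE_def by auto
      show ?thesis
        unfolding cnt_upd[OF g y] stat_upd[OF g] cond_iff[OF c assms y]
        by (auto simp: powr_add)
    qed
    then have "(\<Sum>g\<in>Pi\<^sub>E {1..j} (\<lambda>_. Bset n). ?h (g(Suc j := y))) =
      (\<Sum>g\<in>Pi\<^sub>E {1..j} (\<lambda>_. Bset n). if 0 < \<gamma> y then q powr (real (Suc j) * real_of_int (H b y)) *
        (if cntE n j g = \<gamma>(y := \<gamma> y - 1) then q powr real_of_int (stat j y g) else 0) else 0)"
      by (rule sum.cong[OF refl])
    also have "\<dots> = (if 0 < \<gamma> y then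
      q powr (real (Suc j) * real_of_int (H b y)) * Fq n q j y (\<gamma>(y := \<gamma> y - 1)) else 0)"
      unfolding Fq_def by (simp add: sum_distrib_left)
    finally show "(\<Sum>g\<in>Pi\<^sub>E {1..j} (\<lambda>_. Bset n). ?h (g(Suc j := y))) = (if 0 < \<gamma> y then
      q powr (real (Suc j) * real_of_int (H b y)) * Fq n q j y (\<gamma>(y := \<gamma> y - 1)) else 0)" .
  qed
  finally show ?thesis .
qed




definition Q0 :: "nat \<Rightarrow> (letter \<Rightarrow> nat) \<Rightarrow> real" where
  "Q0 n \<gamma> = (1/2) * (\<Sum>x\<in>Bset n. real (\<gamma> x) * (real (\<gamma> x) - 1)) - real (\<gamma> (Unb 1)) * real (\<gamma> (Bar 1))"

definition Eb :: "nat \<Rightarrow> letter \<Rightarrow> (letter \<Rightarrow> nat) \<Rightarrow> real" where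
  "Eb n b \<gamma> = (\<Sum>x\<in>Bset n. real_of_int (H b x) * real (\<gamma> x))"

definition Dn :: "nat \<Rightarrow> real \<Rightarrow> (letter \<Rightarrow> nat) \<Rightarrow> real" where
  "Dn n q \<gamma> = qpoch (q^2) (\<gamma> (Unb 1)) * qpoch (q^2) (\<gamma> (Bar 1)) * qpoch q (\<gamma> (Unb 1) + \<gamma> (Bar 1))
      * (\<Prod>i=2..n. qpoch q (\<gamma> (Unb i)) * qpoch q (\<gamma> (Bar i)))"

definition Nm :: "real \<Rightarrow> nat \<Rightarrow> (letter \<Rightarrow> nat) \<Rightarrow> real" where
  "Nm q j \<gamma> = qpoch (q^2) (\<gamma> (Unb 1) + \<gamma> (Bar 1)) * qpoch q j"

definition Gx :: "real \<Rightarrow> letter \<Rightarrow> (letter \<Rightarrow> nat) \<Rightarrow> real" where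
  "Gx q b \<gamma> = (if b \<in> {Unb 1, Bar 1} then 1 else
     (q ^ \<gamma> (Unb 1) + q ^ \<gamma> (Bar 1)) / (1 + q ^ (\<gamma> (Unb 1) + \<gamma> (Bar 1))))"

definition T :: "nat \<Rightarrow> real \<Rightarrow> nat \<Rightarrow> letter \<Rightarrow> (letter \<Rightarrow> nat) \<Rightarrow> real" where
  "T n q j b \<gamma> = q powr (Qexp n b \<gamma>) * (Nm q j \<gamma> / Dn n q \<gamma>) * Gx q b \<gamma>"

definition Rx :: "real \<Rightarrow> letter \<Rightarrow> (letter \<Rightarrow> nat) \<Rightarrow> real" where
  "Rx q x \<gamma> = (if x = Unb 1 then (1 - (q^2)^(\<gamma> (Unb 1))) / (1 + q^(\<gamma> (Unb 1) + \<gamma> (Bar 1)))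
     else if x = Bar 1 then (1 - (q^2)^(\<gamma> (Bar 1))) / (1 + q^(\<gamma> (Unb 1) + \<gamma> (Bar 1)))
     else 1 - q ^ (\<gamma> x))"

definition W :: "nat \<Rightarrow> real \<Rightarrow> nat \<Rightarrow> letter \<Rightarrow> letter \<Rightarrow> (letter \<Rightarrow> nat) \<Rightarrow> real" where
  "W n q J b x \<gamma> = q powr (real J * real_of_int (H b x) + Eb n x \<gamma> - real (\<gamma> x)
      + (if x = Unb 1 then real (\<gamma> (Bar 1)) else 0) + (if x = Bar 1 then real (\<gamma> (Unb 1)) else 0))
      * Rx q x \<gamma> * Gx q x \<gamma>"

lemma Qexp_eq: "Qexp n b \<gamma> = Q0 n \<gamma> + Eb n b \<gamma>"
  unfolding Qexp_def Q0_def Eb_def by simp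

lemma qpoch_Suc: "qpoch x (Suc m) = qpoch x m * (1 - x ^ Suc m)"
  unfolding qpoch_def by simp

lemma pow_ne1:
  fixes x :: real
  assumes "0 < x" "x \<noteq> 1" "0 < a" shows "x ^ a \<noteq> 1"
proof (cases "x < 1")
  case True then have "x ^ a < 1" using assms by (simp add: power_less_one_iff)
  then show ?thesis by simp
next
  case False then have "1 < x" using assms by simp
  then have "1 < x ^ a" using assms by (simp add: one_less_power)
  then show ?thesis by simp
qed

lemma qpoch_nz: "0 < x \<Longrightarrow> x \<noteq> 1 \<Longrightarrow> qpoch x m \<noteq> 0"
  unfolding qpoch_def using pow_ne1[of x] by auto

lemma qpoch_pos_dec: "0 < k \<Longrightarrow> qpoch x k = qpoch x (k - 1) * (1 - x ^ k)"
  using qpoch_Suc[of x "k-1"] by simp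

lemma H_refl[simp]: "H x x = 1"
  unfolding H_def by (cases x) auto

lemma sum_upd:
  fixes f :: "'b \<Rightarrow> 'c::ab_group_add"
  assumes "finite A" "x \<in> A"
  shows "(\<Sum>y\<in>A. f ((g(x:=v)) y)) = (\<Sum>y\<in>A. f (g y)) - f (g x) + f v"
proof -
  have "(\<Sum>y\<in>A. f ((g(x:=v)) y)) = f v + (\<Sum>y\<in>A-{x}. f ((g(x:=v)) y))"
    using assms by (simp add: sum.remove)
  also have "(\<Sum>y\<in>A-{x}. f ((g(x:=v)) y)) = (\<Sum>y\<in>A-{x}. f (g y))"
    by (rule sum.cong) auto
  also have "\<dots> = (\<Sum>y\<in>A. f (g y)) - f (g x)"
    using assms by (simp add: sum_diff1)
  finally show ?thesis by simp
qed

lemma sum_upd2: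
  fixes f :: "'b \<Rightarrow> 'd \<Rightarrow> 'c::ab_group_add"
  assumes "finite A" "x \<in> A"
  shows "(\<Sum>y\<in>A. f y ((g(x:=v)) y)) = (\<Sum>y\<in>A. f y (g y)) - f x (g x) + f x v"
proof -
  have "(\<Sum>y\<in>A. f y ((g(x:=v)) y)) = f x v + (\<Sum>y\<in>A-{x}. f y ((g(x:=v)) y))"
    using assms by (simp add: sum.remove)
  also have "(\<Sum>y\<in>A-{x}. f y ((g(x:=v)) y)) = (\<Sum>y\<in>A-{x}. f y (g y))"
    by (rule sum.cong) auto
  also have "\<dots> = (\<Sum>y\<in>A. f y (g y)) - f x (g x)"
    using assms by (simp add: sum_diff1)
  finally show ?thesis by simp
qed

lemma U1_in: "n \<ge> 1 \<Longrightarrow> Unb 1 \<in> Bset n" unfolding Bset_def by auto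
lemma B1_in: "n \<ge> 1 \<Longrightarrow> Bar 1 \<in> Bset n" unfolding Bset_def by auto

lemma Q0_upd:
  assumes "n \<ge> 1" "x \<in> Bset n" "0 < \<gamma> x"
  shows "Q0 n (\<gamma>(x := \<gamma> x - 1)) = Q0 n \<gamma> - (real (\<gamma> x) - 1)
     + (if x = Unb 1 then real (\<gamma> (Bar 1)) else 0) + (if x = Bar 1 then real (\<gamma> (Unb 1)) else 0)"
proof -
  have s: "(\<Sum>y\<in>Bset n. real ((\<gamma>(x := \<gamma> x - 1)) y) * (real ((\<gamma>(x := \<gamma> x - 1)) y) - 1))
     = (\<Sum>y\<in>Bset n. real (\<gamma> y) * (real (\<gamma> y) - 1)) - real (\<gamma> x) * (real (\<gamma> x) - 1)
       + real (\<gamma> x - 1) * (real (\<gamma> x - 1) - 1)"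
    using sum_upd[OF finite_Bset assms(2), of "\<lambda>k. real k * (real k - 1)" \<gamma> "\<gamma> x - 1"] by simp
  have r: "real (\<gamma> x - 1) = real (\<gamma> x) - 1" using assms(3) by simp
  show ?thesis unfolding Q0_def s r
    using assms(3) by (cases "x = Unb 1"; cases "x = Bar 1") (auto simp: algebra_simps of_nat_diff)
qed

lemma Eb_upd:
  assumes "x \<in> Bset n" "0 < \<gamma> x"
  shows "Eb n y (\<gamma>(x := \<gamma> x - 1)) = Eb n y \<gamma> - real_of_int (H y x)"
proof -
  have r: "real (\<gamma> x - 1) = real (\<gamma> x) - 1" using assms(2) by simp
  show ?thesis
    unfolding Eb_def using sum_upd2[OF finite_Bset assms(1), of "\<lambda>z k. real_of_int (H y z) * real k" \<gamma> "\<gamma> x - 1"]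
    using assms(2) by (simp add: of_nat_diff algebra_simps)
qed


lemma prod_upd_eq:
  fixes f :: "nat \<Rightarrow> real"
  assumes "k \<in> {2..n}" "\<And>i. i \<in> {2..n} \<Longrightarrow> i \<noteq> k \<Longrightarrow> f i = g i"
  shows "(\<Prod>i=2..n. f i) = f k * (\<Prod>i\<in>{2..n}-{k}. g i)"
proof -
  have "(\<Prod>i=2..n. f i) = f k * (\<Prod>i\<in>{2..n}-{k}. f i)"
    using assms(1) by (simp add: prod.remove)
  also have "(\<Prod>i\<in>{2..n}-{k}. f i) = (\<Prod>i\<in>{2..n}-{k}. g i)"
    using assms(2) by (intro prod.cong) auto
  finally show ?thesis .
qed

lemma Dn_upd_mid:
  assumes "x \<in> Bset n" "x \<noteq> Unb 1" "x \<noteq> Bar 1" "0 < \<gamma> x"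
  shows "Dn n q \<gamma> = Dn n q (\<gamma>(x := \<gamma> x - 1)) * (1 - q ^ (\<gamma> x))"
proof -
  let ?g = "\<gamma>(x := \<gamma> x - 1)"
  let ?f = "\<lambda>\<delta> i. qpoch q (\<delta> (Unb i)) * qpoch q (\<delta> (Bar i))"
  obtain k where k0: "k \<in> {1..n}" "x = Unb k \<or> x = Bar k"
    using assms(1) unfolding Bset_def by auto
  then have "k \<noteq> 1" using assms(2,3) by auto
  then have k: "k \<in> {2..n}" "x = Unb k \<or> x = Bar k" using k0 by auto
  have same: "?f \<gamma> i = ?f ?g i" if "i \<in> {2..n}" "i \<noteq> k" for i
    using that k by auto
  have P1: "(\<Prod>i=2..n. ?f \<gamma> i) = ?f \<gamma> k * (\<Prod>i\<in>{2..n}-{k}. ?f \<gamma> i)"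
    by (rule prod_upd_eq[OF k(1)]) simp
  have P2: "(\<Prod>i=2..n. ?f ?g i) = ?f ?g k * (\<Prod>i\<in>{2..n}-{k}. ?f \<gamma> i)"
    by (rule prod_upd_eq[OF k(1)]) (simp add: same)
  have fk: "?f \<gamma> k = ?f ?g k * (1 - q ^ (\<gamma> x))"
    using k(2) qpoch_pos_dec[OF assms(4), of q] by auto
  show ?thesis
    unfolding Dn_def P1 P2 fk using assms(2,3) by simp
qed

lemma Dn_upd_U1:
  assumes "0 < \<gamma> (Unb 1)"
  shows "Dn n q \<gamma> = Dn n q (\<gamma>(Unb 1 := \<gamma> (Unb 1) - 1)) * (1 - (q^2) ^ (\<gamma> (Unb 1)))
     * (1 - q ^ (\<gamma> (Unb 1) + \<gamma> (Bar 1)))"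
proof -
  have p: "(\<Prod>i=2..n. qpoch q ((\<gamma>(Unb 1 := \<gamma> (Unb 1) - 1)) (Unb i)) * qpoch q ((\<gamma>(Unb 1 := \<gamma> (Unb 1) - 1)) (Bar i)))
     = (\<Prod>i=2..n. qpoch q (\<gamma> (Unb i)) * qpoch q (\<gamma> (Bar i)))"
    by (intro prod.cong) auto
  have a: "qpoch (q^2) (\<gamma> (Unb 1)) = qpoch (q^2) (\<gamma> (Unb 1) - 1) * (1 - (q^2) ^ (\<gamma> (Unb 1)))"
    using qpoch_pos_dec[OF assms] .
  have b: "qpoch q (\<gamma> (Unb 1) + \<gamma> (Bar 1)) = qpoch q (\<gamma> (Unb 1) - 1 + \<gamma> (Bar 1)) * (1 - q ^ (\<gamma> (Unb 1) + \<gamma> (Bar 1)))"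
    using qpoch_pos_dec[of "\<gamma> (Unb 1) + \<gamma> (Bar 1)" q] assms by simp
  show ?thesis unfolding Dn_def p a b by simp
qed

lemma Dn_upd_B1:
  assumes "0 < \<gamma> (Bar 1)"
  shows "Dn n q \<gamma> = Dn n q (\<gamma>(Bar 1 := \<gamma> (Bar 1) - 1)) * (1 - (q^2) ^ (\<gamma> (Bar 1)))
     * (1 - q ^ (\<gamma> (Unb 1) + \<gamma> (Bar 1)))"
proof -
  have p: "(\<Prod>i=2..n. qpoch q ((\<gamma>(Bar 1 := \<gamma> (Bar 1) - 1)) (Unb i)) * qpoch q ((\<gamma>(Bar 1 := \<gamma> (Bar 1) - 1)) (Bar i)))
     = (\<Prod>i=2..n. qpoch q (\<gamma> (Unb i)) * qpoch q (\<gamma> (Bar i)))"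
    by (intro prod.cong) auto
  have a: "qpoch (q^2) (\<gamma> (Bar 1)) = qpoch (q^2) (\<gamma> (Bar 1) - 1) * (1 - (q^2) ^ (\<gamma> (Bar 1)))"
    using qpoch_pos_dec[OF assms] .
  have b: "qpoch q (\<gamma> (Unb 1) + \<gamma> (Bar 1)) = qpoch q (\<gamma> (Unb 1) + (\<gamma> (Bar 1) - 1)) * (1 - q ^ (\<gamma> (Unb 1) + \<gamma> (Bar 1)))"
    using qpoch_pos_dec[of "\<gamma> (Unb 1) + \<gamma> (Bar 1)" q] assms by simp
  show ?thesis unfolding Dn_def p a b by simp
qed

lemma Nm_upd_mid:
  assumes "x \<noteq> Unb 1" "x \<noteq> Bar 1"
  shows "Nm q (Suc j) \<gamma> = Nm q j (\<gamma>(x := v)) * (1 - q ^ Suc j)"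
  using assms unfolding Nm_def by (simp add: qpoch_Suc)

lemma Nm_upd_1:
  assumes "x = Unb 1 \<or> x = Bar 1" "0 < \<gamma> x"
  shows "Nm q (Suc j) \<gamma> = Nm q j (\<gamma>(x := \<gamma> x - 1)) * (1 - (q^2) ^ (\<gamma> (Unb 1) + \<gamma> (Bar 1))) * (1 - q ^ Suc j)"
proof -
  have "qpoch (q^2) (\<gamma> (Unb 1) + \<gamma> (Bar 1)) = qpoch (q^2) (\<gamma> (Unb 1) + \<gamma> (Bar 1) - 1) * (1 - (q^2) ^ (\<gamma> (Unb 1) + \<gamma> (Bar 1)))"
    using qpoch_pos_dec[of "\<gamma> (Unb 1) + \<gamma> (Bar 1)" "q^2"] assms by auto
  moreover have "(\<gamma>(x := \<gamma> x - 1)) (Unb 1) + (\<gamma>(x := \<gamma> x - 1)) (Bar 1) = \<gamma> (Unb 1) + \<gamma> (Bar 1) - 1"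
    using assms by auto
  ultimately show ?thesis unfolding Nm_def by (simp add: qpoch_Suc)
qed




lemma Dn_nz: "0 < q \<Longrightarrow> q \<noteq> 1 \<Longrightarrow> Dn n q \<gamma> \<noteq> 0"
proof -
  assume q: "0 < q" "q \<noteq> 1"
  then have q2: "0 < q^2" "q^2 \<noteq> 1"
    using pow_ne1[OF q, of 2] by auto
  show ?thesis unfolding Dn_def using qpoch_nz[OF q] qpoch_nz[OF q2] by simp
qed

lemma alg1:
  fixes N D A B :: real
  assumes "A \<noteq> 0" "B \<noteq> 0" "D \<noteq> 0"
  shows "N / D = (N * A) / (D * B) * B / A"
  using assms by (simp add: field_simps)

lemma alg2:
  fixes N D A a u v :: real
  assumes "A \<noteq> 0" "a \<noteq> 0" "D \<noteq> 0" "u \<noteq> 0" "v \<noteq> 0"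
  shows "N / D = (N * (u * v) * A) / (D * a * u) * (a / v) / A"
  using assms by (simp add: field_simps)

lemma alg3:
  fixes a b c N D R A G :: real
  shows "a * (b * c * (N / D * R / A) * G) = b * N / D / A * (a * c * R * G)"
  by (simp add: divide_inverse mult_ac)

lemma ratio_eq:
  assumes q: "0 < q" "q \<noteq> 1" and x: "x \<in> Bset n" "0 < \<gamma> x"
  shows "Nm q j (\<gamma>(x := \<gamma> x - 1)) / Dn n q (\<gamma>(x := \<gamma> x - 1))
     = Nm q (Suc j) \<gamma> / Dn n q \<gamma> * Rx q x \<gamma> / (1 - q ^ Suc j)"
proof -
  let ?g = "\<gamma>(x := \<gamma> x - 1)"
  have J: "1 - q ^ Suc j \<noteq> 0" using pow_ne1[OF q, of "Suc j"] by simp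
  have D': "Dn n q ?g \<noteq> 0" using Dn_nz[OF q] .
  have q2: "0 < q^2" "q^2 \<noteq> 1" using q pow_ne1[OF q, of 2] by auto
  show ?thesis
  proof (cases "x = Unb 1 \<or> x = Bar 1")
    case False
    have gx: "1 - q ^ \<gamma> x \<noteq> 0" using pow_ne1[OF q x(2)] by simp
    have R: "Rx q x \<gamma> = 1 - q ^ \<gamma> x" using False unfolding Rx_def by auto
    have nx: "x \<noteq> Unb 1" "x \<noteq> Bar 1" using False by auto
    show ?thesis
      unfolding R Dn_upd_mid[of x n \<gamma> q, OF x(1) nx x(2)] Nm_upd_mid[OF nx, of q j \<gamma> "\<gamma> x - 1"]
      by (rule alg1[OF J gx D'])
  next
    case True
    let ?s = "\<gamma> (Unb 1) + \<gamma> (Bar 1)"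
    have spos: "0 < ?s" using True x(2) by auto
    have s: "1 - q ^ ?s \<noteq> 0" using pow_ne1[OF q spos] by simp
    have s2: "1 + q ^ ?s \<noteq> 0" using q by (metis add_pos_pos zero_less_one zero_less_power less_irrefl)
    have sq0: "(q^2) ^ ?s = q ^ ?s * q ^ ?s"
      by (simp add: power_mult[symmetric] power2_eq_square[symmetric] mult.commute power_mult_distrib)
    have sq: "1 - (q^2) ^ ?s = (1 - q ^ ?s) * (1 + q ^ ?s)"
      unfolding sq0 by algebra
    show ?thesis
    proof (cases "x = Unb 1")
      case True
      have a: "1 - (q^2) ^ \<gamma> (Unb 1) \<noteq> 0"
        using x(2) True pow_ne1[OF q2, of "\<gamma> (Unb 1)"] by auto
      have R: "Rx q x \<gamma> = (1 - (q^2) ^ \<gamma> (Unb 1)) / (1 + q ^ ?s)" using True unfolding Rx_def by auto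
      have D: "Dn n q \<gamma> = Dn n q ?g * (1 - (q^2) ^ (\<gamma> (Unb 1))) * (1 - q ^ ?s)"
        unfolding True by (rule Dn_upd_U1) (use x(2) True in simp)
      show ?thesis
        unfolding R D Nm_upd_1[of x \<gamma> q j, OF \<open>x = Unb 1 \<or> x = Bar 1\<close> x(2)] sq
        by (rule alg2[OF J a D' s s2])
    next
      case False
      then have xb: "x = Bar 1" using True by auto
      have a: "1 - (q^2) ^ \<gamma> (Bar 1) \<noteq> 0"
        using x(2) xb pow_ne1[OF q2, of "\<gamma> (Bar 1)"] by auto
      have R: "Rx q x \<gamma> = (1 - (q^2) ^ \<gamma> (Bar 1)) / (1 + q ^ ?s)" using xb unfolding Rx_def by auto
      have D: "Dn n q \<gamma> = Dn n q ?g * (1 - (q^2) ^ (\<gamma> (Bar 1))) * (1 - q ^ ?s)"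
        unfolding xb by (rule Dn_upd_B1) (use x(2) xb in simp)
      show ?thesis
        unfolding R D Nm_upd_1[of x \<gamma> q j, OF \<open>x = Unb 1 \<or> x = Bar 1\<close> x(2)] sq
        by (rule alg2[OF J a D' s s2])
    qed
  qed
qed

lemma Gx_upd: "Gx q x (\<gamma>(x := v)) = Gx q x \<gamma>"
  unfolding Gx_def by auto

lemma step:
  assumes n: "n \<ge> 1" and q: "0 < q" "q \<noteq> 1" and x: "x \<in> Bset n" "0 < \<gamma> x"
  shows "q powr (real (Suc j) * real_of_int (H b x)) * T n q j x (\<gamma>(x := \<gamma> x - 1))
    = (q powr Q0 n \<gamma> * Nm q (Suc j) \<gamma> / Dn n q \<gamma>) / (1 - q ^ Suc j) * W n q (Suc j) b x \<gamma>"
proof -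
  let ?g = "\<gamma>(x := \<gamma> x - 1)"
  let ?E = "Eb n x \<gamma> - real (\<gamma> x)
      + (if x = Unb 1 then real (\<gamma> (Bar 1)) else 0) + (if x = Bar 1 then real (\<gamma> (Unb 1)) else 0)"
  have e: "Qexp n x ?g = Q0 n \<gamma> + ?E"
    unfolding Qexp_eq Q0_upd[of n x \<gamma>, OF n x] Eb_upd[of x n \<gamma>, OF x] by simp
  have T1: "T n q j x ?g = q powr (Q0 n \<gamma> + ?E) * (Nm q (Suc j) \<gamma> / Dn n q \<gamma> * Rx q x \<gamma> / (1 - q ^ Suc j)) * Gx q x \<gamma>"
    unfolding T_def e ratio_eq[of q x n \<gamma>, OF q x] Gx_upd ..
  have p1: "q powr (real (Suc j) * real_of_int (H b x) + Eb n x \<gamma> - real (\<gamma> x)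
      + (if x = Unb 1 then real (\<gamma> (Bar 1)) else 0) + (if x = Bar 1 then real (\<gamma> (Unb 1)) else 0))
      = q powr (real (Suc j) * real_of_int (H b x)) * q powr ?E"
    unfolding powr_add[symmetric] by (simp add: algebra_simps)
  have p2: "q powr (Q0 n \<gamma> + ?E) = q powr Q0 n \<gamma> * q powr ?E"
    by (rule powr_add)
  have W1: "W n q (Suc j) b x \<gamma> = q powr (real (Suc j) * real_of_int (H b x)) * q powr ?E * Rx q x \<gamma> * Gx q x \<gamma>"
    unfolding W_def p1 ..
  show ?thesis
    unfolding T1 W1 p2 by (rule alg3)
qed

lemma Rx_zero: "\<gamma> x = 0 \<Longrightarrow> Rx q x \<gamma> = 0"
  unfolding Rx_def by auto




lemma lt1'[simp]: "n \<ge> 1 \<Longrightarrow> lt n (Suc 0) = Unb (Suc 0)" unfolding lt_def by auto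

lemma telescope:
  fixes f :: "nat \<Rightarrow> real"
  assumes "l \<le> m"
  shows "(\<Sum>p=Suc l..m. f (p - 1) - f p) = f l - f m"
  using assms
proof (induction m)
  case 0 then show ?case by simp
next
  case (Suc m)
  show ?case
  proof (cases "l = Suc m")
    case True then show ?thesis by simp
  next
    case False
    then have "l \<le> m" using Suc.prems by simp
    then show ?thesis using Suc.IH by (simp add: sum.cl_ivl_Suc)
  qed
qed

lemma Eb_pos:
  assumes n: "n \<ge> 1" and p: "p \<in> {1..2*n}"
  shows "Eb n (lt n p) \<gamma> = (if p = 1 then real (\<gamma> (lt n 1)) - real (\<gamma> (lt n (2*n)))
      else (\<Sum>r=1..p. real (\<gamma> (lt n r))))"
proof -
  have "Eb n (lt n p) \<gamma> = (\<Sum>r=1..2*n. real_of_int (H (lt n p) (lt n r)) * real (\<gamma> (lt n r)))"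
    unfolding Eb_def sum_Bset ..
  also have "\<dots> = (\<Sum>r=1..2*n. if p = 1 then (if r = 1 then real (\<gamma> (lt n r)) else 0)
        - (if r = 2*n then real (\<gamma> (lt n r)) else 0)
      else (if r \<le> p then real (\<gamma> (lt n r)) else 0))"
  proof (rule sum.cong[OF refl])
    fix r assume r: "r \<in> {1..2*n}"
    show "real_of_int (H (lt n p) (lt n r)) * real (\<gamma> (lt n r)) = (if p = 1 then (if r = 1 then real (\<gamma> (lt n r)) else 0)
        - (if r = 2*n then real (\<gamma> (lt n r)) else 0)
      else (if r \<le> p then real (\<gamma> (lt n r)) else 0))"
      unfolding H_lt[OF p r] using r n by auto
  qed
  also have "\<dots> = (if p = 1 then real (\<gamma> (lt n 1)) - real (\<gamma> (lt n (2*n)))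
      else (\<Sum>r=1..p. real (\<gamma> (lt n r))))"
  proof (cases "p = 1")
    case True
    then show ?thesis using n by (simp add: sum_subtractf sum.delta')
  next
    case False
    have "(\<Sum>r=1..2*n. (if r \<le> p then real (\<gamma> (lt n r)) else 0)) = (\<Sum>r\<in>{1..2*n} \<inter> {r. r \<le> p}. real (\<gamma> (lt n r)))"
      by (simp add: sum.If_cases)
    also have "{1..2*n} \<inter> {r. r \<le> p} = {1..p}" using p by auto
    finally show ?thesis using False by simp
  qed
  finally show ?thesis .
qed


lemma alg_U1:
  fixes u v w :: real
  assumes "0 < v" "0 < u"
  shows "w * ((1 - u*u) / (1 + u*v)) + (u - w / v) * ((u + v) / (1 + u*v)) + u / v * ((1 - v*v) / (1 + u*v))
     = (1 - w) * (u / v) * 1"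
proof -
  define t where "t = 1 / (1 + u*v)"
  define z where "z = 1 / v"
  have uv: "0 < u*v" using assms by simp
  have t: "t * (1 + u*v) = 1" unfolding t_def using uv by simp
  have z: "z * v = 1" unfolding z_def using assms by simp
  have e: "(1 - u*u) / (1 + u*v) = (1 - u*u) * t" "(u + v) / (1 + u*v) = (u + v) * t"
    "(1 - v*v) / (1 + u*v) = (1 - v*v) * t" "w / v = w * z" "u / v = u * z"
    unfolding t_def z_def by simp_all
  show ?thesis unfolding e using t z by algebra
qed

lemma alg_B1:
  fixes u v w :: real
  assumes "0 < v" "0 < u"
  shows "w * ((1 - u*u) / (1 + u*v)) + w * (u - w / v) * ((u + v) / (1 + u*v)) + w * w * u / v * ((1 - v*v) / (1 + u*v))
     = (1 - w) * w * 1"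
proof -
  define t where "t = 1 / (1 + u*v)"
  define z where "z = 1 / v"
  have uv: "0 < u*v" using assms by simp
  have t: "t * (1 + u*v) = 1" unfolding t_def using uv by simp
  have z: "z * v = 1" unfolding z_def using assms by simp
  have e: "(1 - u*u) / (1 + u*v) = (1 - u*u) * t" "(u + v) / (1 + u*v) = (u + v) * t"
    "(1 - v*v) / (1 + u*v) = (1 - v*v) * t" "w / v = w * z" "w * w * u / v = w * w * u * z"
    unfolding t_def z_def by simp_all
  show ?thesis unfolding e using t z by algebra
qed

lemma alg_mid:
  fixes u v w s :: real
  assumes "0 < v" "0 < u"
  shows "w * ((1 - u*u) / (1 + u*v)) + (w * (u - s) + (s - w / v)) * ((u + v) / (1 + u*v)) + w * u / v * ((1 - v*v) / (1 + u*v))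
     = (1 - w) * s * ((u + v) / (1 + u*v))"
proof -
  define t where "t = 1 / (1 + u*v)"
  define z where "z = 1 / v"
  have uv: "0 < u*v" using assms by simp
  have t: "t * (1 + u*v) = 1" unfolding t_def using uv by simp
  have z: "z * v = 1" unfolding z_def using assms by simp
  have e: "(1 - u*u) / (1 + u*v) = (1 - u*u) * t" "(u + v) / (1 + u*v) = (u + v) * t"
    "(1 - v*v) / (1 + u*v) = (1 - v*v) * t" "w / v = w * z" "w * u / v = w * u * z"
    unfolding t_def z_def by simp_all
  show ?thesis unfolding e using t z by algebra
qed


lemma identity:
  assumes n: "n \<ge> 1" and q: "0 < q" "q \<noteq> 1" and b: "b \<in> Bset n"
    and J: "(\<Sum>x\<in>Bset n. \<gamma> x) = J"
  shows "(\<Sum>x\<in>Bset n. W n q J b x \<gamma>) = (1 - q ^ J) * q powr (Eb n b \<gamma>) * Gx q b \<gamma>"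
proof -
  define g where "g r = real (\<gamma> (lt n r))" for r
  define S where "S p = (\<Sum>r=1..p. g r)" for p
  define f where "f p = q powr (S p)" for p
  define a where "a = \<gamma> (Unb (Suc 0))"
  define c where "c = \<gamma> (Bar (Suc 0))"
  define u where "u = q powr real a"
  define v where "v = q powr real c"
  define w where "w = q powr real J"
  define Gm where "Gm = (u + v) / (1 + u * v)"
  have u0: "0 < u" and v0: "0 < v" and w0: "0 < w" unfolding u_def v_def w_def using q by auto
  have qa: "q ^ a = u" "q ^ c = v" "q ^ J = w" "q ^ (a + c) = u * v"
    "(q^2) ^ a = u * u" "(q^2) ^ c = v * v"
    unfolding u_def v_def w_def using q
    by (simp_all add: powr_realpow power_add power_mult[symmetric] power2_eq_square[symmetric] mult.commute power_mult_distrib)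
  have g1: "g 1 = real a" unfolding g_def a_def lt_def using n by simp
  have g2n: "g (2*n) = real c" unfolding g_def c_def lt_def using n by simp
  have SJ: "S (2*n) = real J"
    unfolding S_def g_def using J sum_Bset[of "\<lambda>x. real (\<gamma> x)" n] by (simp add: of_nat_sum[symmetric] del: of_nat_sum)
  have Sstep: "S p = S (p - 1) + g p" if "p \<ge> 1" for p
  proof -
    have "p = Suc (p - 1)" using that by simp
    then have "S p = S (Suc (p-1))" by simp
    also have "\<dots> = S (p - 1) + g (Suc (p - 1))" unfolding S_def by simp
    finally show ?thesis using \<open>p = Suc (p - 1)\<close> by simp
  qed
  have f1: "f 1 = u" unfolding f_def S_def u_def using g1 by simp
  have f2n1: "f (2*n - 1) = w / v"
  proof -
    have "S (2*n - 1) = real J - real c" using Sstep[of "2*n"] SJ g2n n by simp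
    then show ?thesis unfolding f_def w_def v_def by (simp add: powr_diff)
  qed
  have Gmid: "Gx q x \<gamma> = Gm" if "x \<noteq> Unb 1" "x \<noteq> Bar 1" for x
    unfolding Gx_def Gm_def using that qa by (simp add: a_def c_def)
  have "b \<in> lt n ` {1..2*n}" using b lt_image[of n] by simp
  then obtain pb where pb: "pb \<in> {1..2*n}" "b = lt n pb" by blast
  have H1: "H b (Unb 1) = 1" using H_lt[OF pb(1), of 1] n pb by auto
  have H2n: "H b (Bar 1) = (if pb = 1 then -1 else if pb < 2*n then 0 else 1)"
    using H_lt[OF pb(1), of "2*n"] n pb by auto
  have Hm: "H b (lt n p) = (if pb < p then 0 else 1)" if "p \<in> {2..2*n-1}" for p
    using H_lt[OF pb(1), of p] that n pb by auto
  have W1: "W n q J b (Unb 1) \<gamma> = w * ((1 - u*u) / (1 + u*v))"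
  proof -
    have E: "Eb n (Unb 1) \<gamma> = real a - real c"
      using Eb_pos[OF n, of 1 \<gamma>] n unfolding a_def c_def by simp
    show ?thesis unfolding W_def E H1 Rx_def Gx_def qa using w_def
      by (simp add: a_def[symmetric] c_def[symmetric] qa)
  qed
  have W2n: "W n q J b (Bar 1) \<gamma> = q powr (real J * real_of_int (H b (Bar 1)) + real J - real c + real a)
      * ((1 - v*v) / (1 + u*v))"
  proof -
    have E: "Eb n (Bar 1) \<gamma> = real J"
      using Eb_pos[OF n, of "2*n" \<gamma>] n SJ unfolding S_def g_def by simp
    show ?thesis unfolding W_def E Rx_def Gx_def
      by (simp add: a_def[symmetric] c_def[symmetric] qa)
  qed
  have Wm: "W n q J b (lt n p) \<gamma> = q powr (real J * real_of_int (H b (lt n p))) * (f (p - 1) - f p) * Gm"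
    if p: "p \<in> {2..2*n-1}" for p
  proof -
    have ne: "lt n p \<noteq> Unb 1" "lt n p \<noteq> Bar 1" using lt_mid[OF p] by auto
    have p1: "p \<in> {1..2*n}" "p \<noteq> 1" "p \<ge> 1" using p by auto
    have E: "Eb n (lt n p) \<gamma> = S p" using Eb_pos[OF n p1(1), of \<gamma>] p1 unfolding S_def g_def by simp
    have R: "Rx q (lt n p) \<gamma> = 1 - q powr g p"
      unfolding Rx_def using ne q by (simp add: g_def powr_realpow)
    have "q powr (real J * real_of_int (H b (lt n p)) + S p - real (\<gamma> (lt n p))) * (1 - q powr g p)
        = q powr (real J * real_of_int (H b (lt n p))) * (f (p - 1) - f p)"
    proof -
      have "real J * real_of_int (H b (lt n p)) + S p - real (\<gamma> (lt n p)) = real J * real_of_int (H b (lt n p)) + S (p - 1)"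
        using Sstep[OF p1(3)] unfolding g_def by simp
      moreover have "f p = f (p - 1) * q powr g p" unfolding f_def using Sstep[OF p1(3)] by (simp add: powr_add)
      ultimately show ?thesis unfolding f_def by (simp add: powr_add algebra_simps)
    qed
    then show ?thesis unfolding W_def E R Gmid[OF ne] using ne by simp
  qed
  have split: "(\<Sum>x\<in>Bset n. W n q J b x \<gamma>) = W n q J b (Unb 1) \<gamma> + (\<Sum>p=2..2*n-1. W n q J b (lt n p) \<gamma>) + W n q J b (Bar 1) \<gamma>"
  proof -
    have A1: "(\<Sum>x\<in>Bset n. W n q J b x \<gamma>) = (\<Sum>p=1..2*n. W n q J b (lt n p) \<gamma>)" by (rule sum_Bset)
    have A2: "(\<Sum>p=1..2*n. W n q J b (lt n p) \<gamma>) = W n q J b (lt n 1) \<gamma> + (\<Sum>p=2..2*n. W n q J b (lt n p) \<gamma>)"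
      using n sum.atLeast_Suc_atMost[of 1 "2*n" "\<lambda>p. W n q J b (lt n p) \<gamma>"] by (simp add: numeral_2_eq_2)
    have e2: "2*n = Suc (2*n-1)" using n by simp
    have A3: "(\<Sum>p=2..2*n. W n q J b (lt n p) \<gamma>) = (\<Sum>p=2..2*n-1. W n q J b (lt n p) \<gamma>) + W n q J b (lt n (2*n)) \<gamma>"
      using n sum.cl_ivl_Suc[of "\<lambda>p. W n q J b (lt n p) \<gamma>" 2 "2*n-1"] by (simp only: e2[symmetric]) simp
    show ?thesis unfolding A1 A2 A3 using n by simp
  qed
  have Mid: "(\<Sum>p=2..2*n-1. W n q J b (lt n p) \<gamma>) = (\<Sum>p=2..2*n-1. (if pb < p then 1 else w) * (f (p - 1) - f p)) * Gm"
    unfolding sum_distrib_right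
    by (rule sum.cong[OF refl]) (use q in \<open>simp add: Wm Hm w_def\<close>)
  have tel: "(\<Sum>p=Suc l..m. f (p - 1) - f p) = f l - f m" if "l \<le> m" for l m
    using telescope[OF that] .
  show ?thesis
  proof (cases "pb = 1")
    case True
    have bb: "b = Unb 1" using pb True n by simp
    have M: "(\<Sum>p=2..2*n-1. (if pb < p then 1 else w) * (f (p - 1) - f p)) = u - w / v"
      using True tel[of 1 "2*n-1"] n f1 f2n1 by (simp add: numeral_2_eq_2)
    have W2: "W n q J b (Bar 1) \<gamma> = u / v * ((1 - v*v) / (1 + u*v))"
      unfolding W2n H2n using True by (simp add: u_def v_def powr_diff)
    have E: "Eb n b \<gamma> = real a - real c"
      using Eb_pos[OF n, of 1 \<gamma>] n unfolding bb a_def c_def by simp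
    have G: "Gx q b \<gamma> = 1" unfolding Gx_def bb by simp
    show ?thesis unfolding split Mid M W1 W2 E G qa
      using alg_U1[OF v0 u0, of w] by (simp add: u_def v_def powr_diff Gm_def)
  next
    case False
    show ?thesis
    proof (cases "pb = 2*n")
      case True
      have bb: "b = Bar 1" using pb True n by simp
      have M: "(\<Sum>p=2..2*n-1. (if pb < p then 1 else w) * (f (p - 1) - f p)) = w * (u - w / v)"
      proof -
        have "(\<Sum>p=2..2*n-1. (if pb < p then 1 else w) * (f (p - 1) - f p)) = (\<Sum>p=Suc 1..2*n-1. w * (f (p - 1) - f p))"
          using True by (intro sum.cong) (auto simp: numeral_2_eq_2)
        also have "\<dots> = w * (u - w / v)"
          using tel[of 1 "2*n-1"] n f1 f2n1 by (simp add: sum_distrib_left[symmetric])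
        finally show ?thesis .
      qed
      have W2: "W n q J b (Bar 1) \<gamma> = w * w * u / v * ((1 - v*v) / (1 + u*v))"
      proof -
        have ex: "real J * real_of_int (H b (Bar 1)) + real J - real c + real a = (real J + real J + real a) - real c"
          using H2n True n by simp
        show ?thesis
          unfolding W2n ex powr_diff powr_add u_def v_def w_def by simp
      qed
      have E: "Eb n b \<gamma> = real J"
        using Eb_pos[OF n, of "2*n" \<gamma>] n SJ unfolding bb S_def g_def by simp
      have G: "Gx q b \<gamma> = 1" unfolding Gx_def bb by simp
      show ?thesis unfolding split Mid M W1 W2 E G qa
        using alg_B1[OF v0 u0, of w] by (simp add: w_def Gm_def mult.assoc)
    next
      case False2: False
      have pbm: "pb \<in> {2..2*n-1}" using pb False False2 by auto
      have bm: "b \<noteq> Unb 1" "b \<noteq> Bar 1" using lt_mid[OF pbm] pb by auto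
      define sv where "sv = f pb"
      have M: "(\<Sum>p=2..2*n-1. (if pb < p then 1 else w) * (f (p - 1) - f p)) = w * (u - sv) + (sv - w / v)"
      proof -
        have sp: "{2..2*n-1} = {Suc 1..pb} \<union> {Suc pb..2*n-1}" using pbm by auto
        have "(\<Sum>p=2..2*n-1. (if pb < p then 1 else w) * (f (p - 1) - f p))
            = (\<Sum>p=Suc 1..pb. (if pb < p then 1 else w) * (f (p - 1) - f p))
              + (\<Sum>p=Suc pb..2*n-1. (if pb < p then 1 else w) * (f (p - 1) - f p))"
          unfolding sp by (rule sum.union_disjoint) auto
        also have "(\<Sum>p=Suc 1..pb. (if pb < p then 1 else w) * (f (p - 1) - f p)) = w * (f 1 - f pb)"
        proof -
          have "(\<Sum>p=Suc 1..pb. (if pb < p then 1 else w) * (f (p - 1) - f p)) = (\<Sum>p=Suc 1..pb. w * (f (p - 1) - f p))"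
            by (intro sum.cong) auto
          then show ?thesis using tel[of 1 pb] pbm by (simp add: sum_distrib_left[symmetric])
        qed
        also have "(\<Sum>p=Suc pb..2*n-1. (if pb < p then 1 else w) * (f (p - 1) - f p)) = f pb - f (2*n-1)"
        proof -
          have "(\<Sum>p=Suc pb..2*n-1. (if pb < p then 1 else w) * (f (p - 1) - f p)) = (\<Sum>p=Suc pb..2*n-1. (f (p - 1) - f p))"
            by (intro sum.cong) auto
          then show ?thesis using tel[of pb "2*n-1"] pbm by simp
        qed
        finally show ?thesis unfolding sv_def f1 f2n1 .
      qed
      have W2: "W n q J b (Bar 1) \<gamma> = w * u / v * ((1 - v*v) / (1 + u*v))"
        unfolding W2n H2n using False False2 pb by (simp add: u_def v_def w_def powr_diff powr_add)
      have E: "q powr Eb n b \<gamma> = sv"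
        using Eb_pos[OF n pb(1), of \<gamma>] False unfolding pb(2) sv_def f_def S_def g_def by simp
      have G: "Gx q b \<gamma> = Gm" using Gmid[OF bm] .
      show ?thesis unfolding split Mid M W1 W2 E G qa Gm_def
        using alg_mid[OF v0 u0, of w sv] by simp
    qed
  qed
qed




lemma sum_dec:
  fixes \<gamma> :: "'a \<Rightarrow> nat"
  assumes "finite A" "y \<in> A" "0 < \<gamma> y"
  shows "(\<Sum>x\<in>A. (\<gamma>(y := \<gamma> y - 1)) x) = (\<Sum>x\<in>A. \<gamma> x) - 1"
proof -
  have "(\<Sum>x\<in>A. (\<gamma>(y := \<gamma> y - 1)) x) = (\<gamma> y - 1) + (\<Sum>x\<in>A-{y}. (\<gamma>(y := \<gamma> y - 1)) x)"
    using assms by (simp add: sum.remove)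
  also have "(\<Sum>x\<in>A-{y}. (\<gamma>(y := \<gamma> y - 1)) x) = (\<Sum>x\<in>A-{y}. \<gamma> x)"
    by (rule sum.cong) auto
  also have "(\<Sum>x\<in>A. \<gamma> x) = \<gamma> y + (\<Sum>x\<in>A-{y}. \<gamma> x)"
    using assms by (simp add: sum.remove)
  ultimately show ?thesis using assms(3) by simp
qed

lemma T_eq: "T n q J b \<gamma> = (q powr Q0 n \<gamma> * Nm q J \<gamma> / Dn n q \<gamma>) * (q powr Eb n b \<gamma> * Gx q b \<gamma>)"
  unfolding T_def Qexp_eq by (simp add: powr_add)

lemma base:
  assumes n: "n \<ge> 1" and q: "0 < q" and b: "b \<in> Bset n" and g: "\<gamma> \<in> Pi\<^sub>E (Bset n) (\<lambda>_. UNIV)"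
    and s: "(\<Sum>x\<in>Bset n. \<gamma> x) = 0"
  shows "Fq n q 0 b \<gamma> = T n q 0 b \<gamma>"
proof -
  have z: "\<gamma> x = 0" if "x \<in> Bset n" for x using s that by simp
  have gz: "\<gamma> = (\<lambda>x\<in>Bset n. 0)" using g z by (auto simp: fun_eq_iff PiE_def extensional_def)
  have c0: "cntE n 0 bs = \<gamma>" for bs unfolding cntE_def gz by simp
  have F: "Fq n q 0 b \<gamma> = 1" unfolding Fq_def c0 stat_def using q by simp
  have U: "\<gamma> (Unb i) = 0" "\<gamma> (Bar i) = 0" if "i \<in> {1..n}" for i
    using z that unfolding Bset_def by auto
  have Q: "Qexp n b \<gamma> = 0" unfolding Qexp_def using z U[of 1] n by simp
  have D: "Dn n q \<gamma> = 1" unfolding Dn_def qpoch_def using U n by simp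
  have N: "Nm q 0 \<gamma> = 1" unfolding Nm_def qpoch_def using U n by simp
  have G: "Gx q b \<gamma> = 1" unfolding Gx_def using U n by simp
  show ?thesis unfolding F T_def Q D N G using q by simp
qed

lemma F_eq_T:
  assumes n: "n \<ge> 1" and q: "0 < q" "q \<noteq> 1"
  shows "\<forall>b\<in>Bset n. \<forall>\<gamma>\<in>Pi\<^sub>E (Bset n) (\<lambda>_. UNIV). (\<Sum>x\<in>Bset n. \<gamma> x) = j \<longrightarrow> Fq n q j b \<gamma> = T n q j b \<gamma>"
proof (induction j)
  case 0
  then show ?case using base[OF n q(1)] by blast
next
  case (Suc j)
  show ?case
  proof (intro ballI impI)
    fix b \<gamma> assume b: "b \<in> Bset n" and g: "\<gamma> \<in> Pi\<^sub>E (Bset n) (\<lambda>_. UNIV)" and s: "(\<Sum>x\<in>Bset n. \<gamma> x) = Suc j"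
    define P where "P = q powr Q0 n \<gamma> * Nm q (Suc j) \<gamma> / Dn n q \<gamma>"
    have J: "1 - q ^ Suc j \<noteq> 0" using pow_ne1[OF q, of "Suc j"] by simp
    have trm: "(if 0 < \<gamma> y then q powr (real (Suc j) * real_of_int (H b y)) * Fq n q j y (\<gamma>(y := \<gamma> y - 1)) else 0)
        = P / (1 - q ^ Suc j) * W n q (Suc j) b y \<gamma>" if y: "y \<in> Bset n" for y
    proof (cases "0 < \<gamma> y")
      case True
      have g': "\<gamma>(y := \<gamma> y - 1) \<in> Pi\<^sub>E (Bset n) (\<lambda>_. UNIV)" using g y by (auto simp: PiE_def extensional_def)
      have s': "(\<Sum>x\<in>Bset n. (\<gamma>(y := \<gamma> y - 1)) x) = j" using sum_dec[of "Bset n" y \<gamma>, OF finite_Bset y True] s by simp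
      have "Fq n q j y (\<gamma>(y := \<gamma> y - 1)) = T n q j y (\<gamma>(y := \<gamma> y - 1))"
        using Suc.IH y g' s' by blast
      then show ?thesis using True step[of n q y \<gamma> j b, OF n q y True] unfolding P_def by simp
    next
      case False
      then have "\<gamma> y = 0" by simp
      then have "W n q (Suc j) b y \<gamma> = 0" unfolding W_def Rx_zero[of \<gamma> y q, OF \<open>\<gamma> y = 0\<close>] by simp
      then show ?thesis using False by simp
    qed
    have "Fq n q (Suc j) b \<gamma> = (\<Sum>y\<in>Bset n. P / (1 - q ^ Suc j) * W n q (Suc j) b y \<gamma>)"
      unfolding F_rec[OF g] by (rule sum.cong[OF refl]) (rule trm)
    also have "\<dots> = P / (1 - q ^ Suc j) * ((1 - q ^ Suc j) * q powr (Eb n b \<gamma>) * Gx q b \<gamma>)"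
      unfolding sum_distrib_left[symmetric] identity[OF n q b s] ..
    also have "\<dots> = T n q (Suc j) b \<gamma>"
      unfolding T_eq P_def using J by simp
    finally show "Fq n q (Suc j) b \<gamma> = T n q (Suc j) b \<gamma>" .
  qed
qed




lemma Gfac_eq:
  assumes q: "0 < q" and m: "real_of_int (mus 1) = real (\<gamma> (Unb 1)) - real (\<gamma> (Bar 1))"
  shows "Gfac b mus \<gamma> q = Gx q b \<gamma>"
proof (cases "b \<in> {Unb 1, Bar 1}")
  case True then show ?thesis unfolding Gfac_def Gx_def by simp
next
  case False
  define a where "a = real (\<gamma> (Unb 1))"
  define c where "c = real (\<gamma> (Bar 1))"
  define h where "h = q powr ((a + c) / 2)"
  have h0: "0 < h" unfolding h_def using q by simp
  have x1: "(a - c) / 2 + (a + c) / 2 = a" "- (a - c) / 2 + (a + c) / 2 = c"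
    "(a + c) / 2 + (a + c) / 2 = a + c" "- (a + c) / 2 + (a + c) / 2 = 0" by (simp_all add: field_simps)
  have e1: "q powr ((a - c) / 2) * h = q powr a" unfolding h_def powr_add[symmetric] x1 ..
  have e2: "q powr (- (a - c) / 2) * h = q powr c" unfolding h_def powr_add[symmetric] x1 ..
  have e3: "q powr ((a + c) / 2) * h = q powr (a + c)" unfolding h_def powr_add[symmetric] x1 ..
  have e4: "q powr (- (a + c) / 2) * h = 1" unfolding h_def powr_add[symmetric] x1 using q by simp
  have pa: "q powr a = q ^ \<gamma> (Unb 1)" "q powr c = q ^ \<gamma> (Bar 1)" "q powr (a + c) = q ^ (\<gamma> (Unb 1) + \<gamma> (Bar 1))"
    unfolding a_def c_def using q by (simp_all add: powr_realpow powr_add power_add)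
  have den: "q powr ((a + c) / 2) + q powr (- (a + c) / 2) > 0" using q by (simp add: add_pos_pos)
  have "(q powr ((a - c) / 2) + q powr (- (a - c) / 2)) / (q powr ((a + c) / 2) + q powr (- (a + c) / 2))
      = ((q powr ((a - c) / 2) + q powr (- (a - c) / 2)) * h) / ((q powr ((a + c) / 2) + q powr (- (a + c) / 2)) * h)"
    using h0 by simp
  also have "\<dots> = (q powr a + q powr c) / (q powr (a + c) + 1)"
    unfolding distrib_right e1 e2 e3 e4 ..
  finally have X: "(q powr ((a - c) / 2) + q powr (- (a - c) / 2)) / (q powr ((a + c) / 2) + q powr (- (a + c) / 2))
      = (q ^ \<gamma> (Unb 1) + q ^ \<gamma> (Bar 1)) / (1 + q ^ (\<gamma> (Unb 1) + \<gamma> (Bar 1)))"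
    unfolding pa by (simp add: add.commute)
  have m': "real_of_int (mus 1) = a - c" unfolding a_def c_def using m .
  have ac: "real (\<gamma> (Unb 1) + \<gamma> (Bar 1)) = a + c" unfolding a_def c_def by simp
  show ?thesis unfolding Gfac_def Gx_def m' ac using False X by simp
qed

theorem mainTheorem15:
  fixes n j :: nat and b :: letter and mus :: "nat \<Rightarrow> int" and q :: real
  assumes "n \<ge> 3" and "b \<in> Bset n" and "0 < q" and "q \<noteq> 1"
  shows "gfun n j b (muw n mus) q = rhs n j b mus q"
proof -
  have n2: "n \<ge> 2" and n1: "n \<ge> 1" using assms(1) by auto
  note q = assms(3,4)
  note b = assms(2)
  let ?A = "Pi\<^sub>E {1..j} (\<lambda>_. Bset n)"
  let ?P = "{bs \<in> ?A. (\<lambda>k. \<Sum>i=1..j. wt (bs i) k) = muw n mus}"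
  let ?h = "\<lambda>bs. q powr real_of_int (stat j b bs)"
  have finA: "finite ?A" by (simp add: finite_PiE)
  have finP: "finite ?P" using finA by simp
  have GamSub: "Gam n j mus \<subseteq> Pi\<^sub>E (Bset n) (\<lambda>_. {0..j})"
  proof
    fix \<gamma> assume g: "\<gamma> \<in> Gam n j mus"
    have "\<gamma> x \<le> j" if "x \<in> Bset n" for x
    proof -
      have "\<gamma> x \<le> (\<Sum>y\<in>Bset n. \<gamma> y)" using that by (intro member_le_sum) auto
      then show ?thesis using g unfolding Gam_def by simp
    qed
    then show "\<gamma> \<in> Pi\<^sub>E (Bset n) (\<lambda>_. {0..j})" using g unfolding Gam_def by auto
  qed
  have finG: "finite (Gam n j mus)"
    by (rule finite_subset[OF GamSub]) (simp add: finite_PiE)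
  have img: "cntE n j ` ?P \<subseteq> Gam n j mus"
    using weight_iff_Gam[OF n2] by auto
  have "gfun n j b (muw n mus) q = sum ?h ?P"
    unfolding gfun_def stat_def ..
  also have "\<dots> = (\<Sum>\<gamma>\<in>Gam n j mus. sum ?h {bs. bs \<in> ?P \<and> cntE n j bs = \<gamma>})"
    by (rule sum.group[OF finP finG img, symmetric])
  also have "\<dots> = (\<Sum>\<gamma>\<in>Gam n j mus. Fq n q j b \<gamma>)"
  proof (rule sum.cong[OF refl])
    fix \<gamma> assume g: "\<gamma> \<in> Gam n j mus"
    have "{bs. bs \<in> ?P \<and> cntE n j bs = \<gamma>} = {bs \<in> ?A. cntE n j bs = \<gamma>}"
      using weight_iff_Gam[OF n2] g by auto
    then have "sum ?h {bs. bs \<in> ?P \<and> cntE n j bs = \<gamma>} = sum ?h {bs \<in> ?A. cntE n j bs = \<gamma>}" by simp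
    also have "\<dots> = Fq n q j b \<gamma>"
      unfolding Fq_def using finA by (simp add: sum.inter_filter)
    finally show "sum ?h {bs. bs \<in> ?P \<and> cntE n j bs = \<gamma>} = Fq n q j b \<gamma>" .
  qed
  also have "\<dots> = (\<Sum>\<gamma>\<in>Gam n j mus. T n q j b \<gamma>)"
  proof (rule sum.cong[OF refl])
    fix \<gamma> assume g: "\<gamma> \<in> Gam n j mus"
    then have "\<gamma> \<in> Pi\<^sub>E (Bset n) (\<lambda>_. UNIV)" "(\<Sum>x\<in>Bset n. \<gamma> x) = j" unfolding Gam_def by auto
    then show "Fq n q j b \<gamma> = T n q j b \<gamma>" using F_eq_T[OF n1 q] b by blast
  qed
  also have "\<dots> = rhs n j b mus q"
    unfolding rhs_def
  proof (rule sum.cong[OF refl])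
    fix \<gamma> assume g: "\<gamma> \<in> Gam n j mus"
    then have "int (\<gamma> (Unb 1)) - int (\<gamma> (Bar 1)) = mus 1" unfolding Gam_def using n1 by auto
    then have m: "real_of_int (mus 1) = real (\<gamma> (Unb 1)) - real (\<gamma> (Bar 1))" by linarith
    show "T n q j b \<gamma> = q powr (Qexp n b \<gamma>) *
     (qpoch (q^2) (\<gamma> (Unb 1) + \<gamma> (Bar 1)) * qpoch q j) /
     (qpoch (q^2) (\<gamma> (Unb 1)) * qpoch (q^2) (\<gamma> (Bar 1)) * qpoch q (\<gamma> (Unb 1) + \<gamma> (Bar 1))
      * (\<Prod>i=2..n. qpoch q (\<gamma> (Unb i)) * qpoch q (\<gamma> (Bar i))))
     * Gfac b mus \<gamma> q"
      unfolding T_def Nm_def Dn_def Gfac_eq[of q mus \<gamma> b, OF q(1) m] by simp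
  qed
  finally show ?thesis .
qed



end
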